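(* Let $\mathcal I$ index a finite set of strategies for the iterated Prisoner's Dilemma (payoffs normalized with $T=1$, $S=0$). (a) Suppose the strategy indexed by $i^*$ is a memory-one vector $\mathbf p^{i^*}=(p_1,p_2,0,0)$ with $p_1,p_2<1$, together with any initial play. If for no other $j\in\mathcal I$ is $\mathbf p^j$ firm, then $i^*$ is an ESS for the game $\{A_{ij}\}$. (b) Suppose the strategy indexed by $i^*$ is a memory-one vector $\mathbf p^{i^*}=(1,p_2,0,0)$ with $p_2<1$, together with any initial play. If for no other $j\in\mathcal I$ is $\mathbf p^j$ either agreeable or firm, then $i^*$ is an ESS for the game $\{A_{ij}\}$. (c) Assume $P<\tfrac12$. Suppose the strategy indexed by $i^*$ is a firm, non-exceptional zero-determinant strategy with $\bar\alpha<0$, together with any initial play. If for no other $j\in\mathcal I$ is $\mathbf p^j$ firm, then $i^*$ is an ESS for the game $\{A_{ij}\}$.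
   Context: Iterated Prisoner's Dilemma with normalized payoffs $T=1>R>P>S=0$, $2R>1$; outcomes ordered $cc,cd,dc,dd$ (own play first); payoff vectors $\mathbf S_X=(R,0,1,P)$, $\mathbf S_Y=(R,1,0,P)$, $\mathbf 1=(1,1,1,1)$, $\mathbf e_{23}=(0,1,1,0)$. A memory-one strategy vector is $\mathbf p\in[0,1]^4$, $p_i$ being the probability of playing $c$ after the $i$-th outcome, outcomes labeled from the player's own perspective; it is agreeable if $p_1=1$ and firm if $p_4=0$. A strategy is such a vector together with an initial play. Its X Press-Dyson vector $\mathbf p-(1,1,0,0)$ decomposes uniquely as $\alpha\mathbf S_X+\beta\mathbf S_Y+\gamma\mathbf 1+\delta\mathbf e_{23}$; $\mathbf p$ is a non-exceptional zero-determinant strategy if $\delta=0$ and $\gamma>0$, and then $\bar\alpha=\alpha/\gamma$. For $i,j\in\mathcal I$, $A_{ij}$ is the long-run (Cesàro-limit) average payoff of X when X uses strategy $i$ and Y uses strategy $j$. $i^*$ is an evolutionarily stable strategy (ESS) if $A_{ji^*}<A_{i^*i^*}$ for all $j\ne i^*$. *)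

theory Defs
  imports Complex_Main
begin

text \<open>Outcomes of one round, labelled from the focal player's perspective
  (own play first): cc, cd, dc, dd.\<close>
datatype outcome = CC | CD | DC | DD

lemma UNIV_outcome: "(UNIV :: outcome set) = {CC, CD, DC, DD}"
  using outcome.exhaust by auto

instance outcome :: finite
  by standard (simp add: UNIV_outcome)

text \<open>A memory-one strategy vector: probability of cooperating after each outcome.\<close>
type_synonym memvec = "outcome \<Rightarrow> real"

text \<open>A strategy: a memory-one vector together with an initial play (True = c, False = d).\<close>
type_synonym strategy = "memvec \<times> bool"

definition memvec_ok :: "memvec \<Rightarrow> bool" where
  "memvec_ok p \<longleftrightarrow> (\<forall>s. 0 \<le> p s \<and> p s \<le> 1)"

definition agreeable :: "memvec \<Rightarrow> bool" where
  "agreeable p \<longleftrightarrow> p CC = 1"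

definition firm :: "memvec \<Rightarrow> bool" where
  "firm p \<longleftrightarrow> p DD = 0"

fun own_c :: "outcome \<Rightarrow> bool" where
  "own_c CC = True" | "own_c CD = True" | "own_c DC = False" | "own_c DD = False"

fun other_c :: "outcome \<Rightarrow> bool" where
  "other_c CC = True" | "other_c CD = False" | "other_c DC = True" | "other_c DD = False"

fun swap_out :: "outcome \<Rightarrow> outcome" where
  "swap_out CC = CC" | "swap_out CD = DC" | "swap_out DC = CD" | "swap_out DD = DD"

definition mk_outcome :: "bool \<Rightarrow> bool \<Rightarrow> outcome" where
  "mk_outcome a b = (if a then (if b then CC else CD) else (if b then DC else DD))"

definition trans_prob :: "memvec \<Rightarrow> memvec \<Rightarrow> outcome \<Rightarrow> outcome \<Rightarrow> real" where
  "trans_prob p q s t =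
     (if own_c t then p s else 1 - p s) *
     (if other_c t then q (swap_out s) else 1 - q (swap_out s))"

fun outcome_dist :: "strategy \<Rightarrow> strategy \<Rightarrow> nat \<Rightarrow> outcome \<Rightarrow> real" where
  "outcome_dist sx sy 0 s = (if s = mk_outcome (snd sx) (snd sy) then 1 else 0)"
| "outcome_dist sx sy (Suc n) t =
     (\<Sum>s\<in>UNIV. outcome_dist sx sy n s * trans_prob (fst sx) (fst sy) s t)"

fun S_X :: "real \<Rightarrow> real \<Rightarrow> outcome \<Rightarrow> real" where
  "S_X R P CC = R" | "S_X R P CD = 0" | "S_X R P DC = 1" | "S_X R P DD = P"

fun S_Y :: "real \<Rightarrow> real \<Rightarrow> outcome \<Rightarrow> real" where
  "S_Y R P CC = R" | "S_Y R P CD = 1" | "S_Y R P DC = 0" | "S_Y R P DD = P"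

fun e23 :: "outcome \<Rightarrow> real" where
  "e23 CC = 0" | "e23 CD = 1" | "e23 DC = 1" | "e23 DD = 0"

definition avg_payoff :: "real \<Rightarrow> real \<Rightarrow> strategy \<Rightarrow> strategy \<Rightarrow> real" where
  "avg_payoff R P sx sy =
     lim (\<lambda>N. (\<Sum>n<N. \<Sum>s\<in>UNIV. outcome_dist sx sy n s * S_X R P s) / real N)"

definition press_dyson :: "memvec \<Rightarrow> outcome \<Rightarrow> real" where
  "press_dyson p s = p s - (if own_c s then 1 else 0)"

definition nonexc_ZD_abar :: "real \<Rightarrow> real \<Rightarrow> memvec \<Rightarrow> real \<Rightarrow> bool" where
  "nonexc_ZD_abar R P p abar \<longleftrightarrow>
     (\<exists>\<alpha> \<beta> \<gamma> \<delta>. (\<forall>s. press_dyson p s = \<alpha> * S_X R P s + \<beta> * S_Y R P s + \<gamma> + \<delta> * e23 s)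
        \<and> \<delta> = 0 \<and> \<gamma> > 0 \<and> abar = \<alpha> / \<gamma>)"

definition ESS :: "'i set \<Rightarrow> ('i \<Rightarrow> 'i \<Rightarrow> real) \<Rightarrow> 'i \<Rightarrow> bool" where
  "ESS I A istar \<longleftrightarrow> (\<forall>j\<in>I. j \<noteq> istar \<longrightarrow> A j istar < A istar istar)"

end

theory Submission
  imports Defs "HOL-Analysis.Analysis"
begin


definition mmul :: "('a::finite \<Rightarrow> 'a \<Rightarrow> real) \<Rightarrow> ('a \<Rightarrow> 'a \<Rightarrow> real) \<Rightarrow> 'a \<Rightarrow> 'a \<Rightarrow> real" where
  "mmul A B s t = (\<Sum>k\<in>UNIV. A s k * B k t)"

definition mid :: "'a::finite \<Rightarrow> 'a \<Rightarrow> real" where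
  "mid s t = (if s = t then 1 else 0)"

fun mpow :: "('a::finite \<Rightarrow> 'a \<Rightarrow> real) \<Rightarrow> nat \<Rightarrow> 'a \<Rightarrow> 'a \<Rightarrow> real" where
  "mpow T 0 = mid"
| "mpow T (Suc n) = mmul (mpow T n) T"

definition ces :: "('a::finite \<Rightarrow> 'a \<Rightarrow> real) \<Rightarrow> nat \<Rightarrow> 'a \<Rightarrow> 'a \<Rightarrow> real" where
  "ces T N s t = (\<Sum>n<N. mpow T n s t) / real N"

lemma mmul_assoc: "mmul (mmul A B) C = mmul A (mmul B C)"
  unfolding mmul_def
  by (auto simp: fun_eq_iff sum_distrib_left sum_distrib_right mult.assoc intro: sum.swap)

lemma if01_mult: "(if P then 1 else 0) * (a::real) = (if P then a else 0)"
  "a * (if P then 1 else 0) = (if P then a else 0)" by simp_all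

lemma mmul_mid_left[simp]: "mmul mid A = A"
  by (simp add: fun_eq_iff mmul_def mid_def if01_mult)

lemma mmul_mid_right[simp]: "mmul A mid = A"
  by (simp add: fun_eq_iff mmul_def mid_def if01_mult)

lemma mpow_Suc': "mpow T (Suc n) = mmul T (mpow T n)"
  by (induction n) (simp_all add: mmul_assoc)

lemma mmul_sum_left: "mmul (\<lambda>s t. \<Sum>n\<in>A. F n s t) B s t = (\<Sum>n\<in>A. mmul (F n) B s t)"
  unfolding mmul_def by (simp add: sum_distrib_right) (rule sum.swap)

lemma mmul_sum_right: "mmul B (\<lambda>s t. \<Sum>n\<in>A. F n s t) s t = (\<Sum>n\<in>A. mmul B (F n) s t)"
  unfolding mmul_def by (simp add: sum_distrib_left) (rule sum.swap)

lemma mmul_div_left: "mmul (\<lambda>s t. F s t / c) B s t = mmul F B s t / c"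
  unfolding mmul_def by (simp add: sum_divide_distrib)

lemma mmul_div_right: "mmul B (\<lambda>s t. F s t / c) s t = mmul B F s t / c"
  unfolding mmul_def by (simp add: sum_divide_distrib)

locale stoch =
  fixes T :: "'a::finite \<Rightarrow> 'a \<Rightarrow> real"
  assumes nonneg: "\<And>s t. 0 \<le> T s t" and rows: "\<And>s. (\<Sum>t\<in>UNIV. T s t) = 1"
begin

lemma mpow_nonneg: "0 \<le> mpow T n s t"
  by (induction n arbitrary: t) (auto simp: mid_def mmul_def nonneg intro!: sum_nonneg)

lemma mpow_rows: "(\<Sum>t\<in>UNIV. mpow T n s t) = 1"
proof (induction n)
  case 0 then show ?case by (simp add: mid_def)
next
  case (Suc n)
  have "(\<Sum>t\<in>UNIV. mpow T (Suc n) s t) = (\<Sum>t\<in>UNIV. \<Sum>k\<in>UNIV. mpow T n s k * T k t)"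
    by (simp add: mmul_def)
  also have "\<dots> = (\<Sum>k\<in>UNIV. \<Sum>t\<in>UNIV. mpow T n s k * T k t)"
    by (rule sum.swap)
  also have "\<dots> = (\<Sum>k\<in>UNIV. mpow T n s k * (\<Sum>t\<in>UNIV. T k t))"
    by (simp add: sum_distrib_left)
  also have "\<dots> = 1" using Suc by (simp add: rows)
  finally show ?case .
qed

lemma mpow_le1: "mpow T n s t \<le> 1"
proof -
  have "mpow T n s t \<le> (\<Sum>t\<in>UNIV. mpow T n s t)"
    by (rule member_le_sum) (auto simp: mpow_nonneg)
  then show ?thesis by (simp add: mpow_rows)
qed

lemma ces_nonneg: "0 \<le> ces T N s t"
  unfolding ces_def by (auto intro!: sum_nonneg divide_nonneg_nonneg mpow_nonneg)

lemma ces_le1: "ces T N s t \<le> 1"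
proof (cases "N = 0")
  case False
  have "(\<Sum>n<N. mpow T n s t) \<le> (\<Sum>n<N. 1)" by (rule sum_mono) (simp add: mpow_le1)
  then show ?thesis using False by (simp add: ces_def)
qed (simp add: ces_def)

lemma ces_rows: "N > 0 \<Longrightarrow> (\<Sum>t\<in>UNIV. ces T N s t) = 1"
proof -
  assume "N > 0"
  have "(\<Sum>t\<in>UNIV. \<Sum>n<N. mpow T n s t) = (\<Sum>n<N. \<Sum>t\<in>UNIV. mpow T n s t)"
    by (rule sum.swap)
  also have "\<dots> = real N" by (simp add: mpow_rows)
  finally show ?thesis using \<open>N > 0\<close> unfolding ces_def by (simp add: sum_divide_distrib[symmetric])
qed

lemma ces_eq: "ces T N = (\<lambda>s t. (\<Sum>n<N. mpow T n s t) / real N)"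
  by (simp add: fun_eq_iff ces_def)

lemma ces_right: "mmul (ces T N) T s t - ces T N s t = (mpow T N s t - mid s t) / real N"
proof -
  have "mmul (ces T N) T s t = (\<Sum>n<N. mpow T (Suc n) s t) / real N"
    by (simp add: ces_eq mmul_div_left mmul_sum_left)
  moreover have "(\<Sum>n<N. mpow T (Suc n) s t - mpow T n s t) = mpow T N s t - mpow T 0 s t"
    by (rule sum_lessThan_telescope)
  ultimately show ?thesis
    by (simp add: ces_def diff_divide_distrib[symmetric] sum_subtractf del: mpow.simps) simp
qed

lemma ces_left: "mmul T (ces T N) s t - ces T N s t = (mpow T N s t - mid s t) / real N"
proof -
  have "mmul T (ces T N) s t = (\<Sum>n<N. mpow T (Suc n) s t) / real N"
    by (simp add: ces_eq mmul_div_right mmul_sum_right mpow_Suc' del: mpow.simps)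
  moreover have "(\<Sum>n<N. mpow T (Suc n) s t - mpow T n s t) = mpow T N s t - mpow T 0 s t"
    by (rule sum_lessThan_telescope)
  ultimately show ?thesis
    by (simp add: ces_def diff_divide_distrib[symmetric] sum_subtractf del: mpow.simps) simp
qed

lemma diff_lim: "(\<lambda>N. (mpow T N s t - mid s t) / real N) \<longlonglongrightarrow> 0"
proof (rule Lim_null_comparison)
  show "\<forall>\<^sub>F N in sequentially. norm ((mpow T N s t - mid s t) / real N) \<le> 1 / real N"
  proof (rule always_eventually, intro allI)
    fix N :: nat
    have "\<bar>mpow T N s t - mid s t\<bar> \<le> 1"
      using mpow_nonneg[of N s t] mpow_le1[of N s t] by (auto simp: mid_def)
    then show "norm ((mpow T N s t - mid s t) / real N) \<le> 1 / real N"
      by (simp add: abs_divide divide_right_mono)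
  qed
  show "(\<lambda>N. 1 / real N) \<longlonglongrightarrow> 0" by (rule lim_const_over_n)
qed

definition limpt :: "('a \<Rightarrow> 'a \<Rightarrow> real) \<Rightarrow> bool" where
  "limpt L \<longleftrightarrow> (\<exists>r. strict_mono r \<and> (\<forall>s t. (\<lambda>n. ces T (r n) s t) \<longlonglongrightarrow> L s t))"

lemma limpt_right: assumes "limpt L" shows "mmul L T = L"
proof -
  obtain r where r: "strict_mono r" "\<And>s t. (\<lambda>n. ces T (r n) s t) \<longlonglongrightarrow> L s t"
    using assms unfolding limpt_def by blast
  have "mmul L T s t = L s t" for s t
  proof -
    have 1: "(\<lambda>n. mmul (ces T (r n)) T s t) \<longlonglongrightarrow> mmul L T s t"
      unfolding mmul_def by (intro tendsto_intros r)
    have 2: "(\<lambda>n. mmul (ces T (r n)) T s t - ces T (r n) s t) \<longlonglongrightarrow> 0"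
      unfolding ces_right using LIMSEQ_subseq_LIMSEQ[OF diff_lim r(1), of s t] by (simp add: o_def)
    have "(\<lambda>n. mmul (ces T (r n)) T s t - ces T (r n) s t) \<longlonglongrightarrow> mmul L T s t - L s t"
      by (intro tendsto_intros 1 r)
    from LIMSEQ_unique[OF this 2] show ?thesis by simp
  qed
  then show ?thesis by (simp add: fun_eq_iff)
qed

lemma limpt_left: assumes "limpt L" shows "mmul T L = L"
proof -
  obtain r where r: "strict_mono r" "\<And>s t. (\<lambda>n. ces T (r n) s t) \<longlonglongrightarrow> L s t"
    using assms unfolding limpt_def by blast
  have "mmul T L s t = L s t" for s t
  proof -
    have 1: "(\<lambda>n. mmul T (ces T (r n)) s t) \<longlonglongrightarrow> mmul T L s t"
      unfolding mmul_def by (intro tendsto_intros r)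
    have 2: "(\<lambda>n. mmul T (ces T (r n)) s t - ces T (r n) s t) \<longlonglongrightarrow> 0"
      unfolding ces_left using LIMSEQ_subseq_LIMSEQ[OF diff_lim r(1), of s t] by (simp add: o_def)
    have "(\<lambda>n. mmul T (ces T (r n)) s t - ces T (r n) s t) \<longlonglongrightarrow> mmul T L s t - L s t"
      by (intro tendsto_intros 1 r)
    from LIMSEQ_unique[OF this 2] show ?thesis by simp
  qed
  then show ?thesis by (simp add: fun_eq_iff)
qed

lemma fix_pow: "mmul L T = L \<Longrightarrow> mmul L (mpow T n) = L"
  by (induction n) (simp, simp add: mpow_Suc' mmul_assoc[symmetric] del: mpow.simps)

lemma fix_pow': "mmul T L = L \<Longrightarrow> mmul (mpow T n) L = L"
  by (induction n) (simp_all add: mmul_assoc)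

lemma fix_ces: assumes "mmul L T = L" "N > 0" shows "mmul L (ces T N) s t = L s t"
  using assms by (simp add: ces_eq mmul_div_right mmul_sum_right fix_pow del: mpow.simps)

lemma fix_ces': assumes "mmul T L = L" "N > 0" shows "mmul (ces T N) L s t = L s t"
  using assms by (simp add: ces_eq mmul_div_left mmul_sum_left fix_pow' del: mpow.simps)

lemma limpt_unique: assumes "limpt L1" "limpt L2" shows "L1 = L2"
proof -
  obtain r1 where r1: "strict_mono r1" "\<And>s t. (\<lambda>n. ces T (r1 n) s t) \<longlonglongrightarrow> L1 s t"
    using assms unfolding limpt_def by blast
  obtain r2 where r2: "strict_mono r2" "\<And>s t. (\<lambda>n. ces T (r2 n) s t) \<longlonglongrightarrow> L2 s t"
    using assms unfolding limpt_def by blast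
  have pos1: "r1 (Suc n) > 0" for n using seq_suble[OF r1(1), of "Suc n"] by simp
  have pos2: "r2 (Suc n) > 0" for n using seq_suble[OF r2(1), of "Suc n"] by simp
  have "L1 s t = mmul L1 L2 s t" for s t
  proof -
    have "(\<lambda>n. mmul L1 (ces T (r2 n)) s t) \<longlonglongrightarrow> mmul L1 L2 s t"
      unfolding mmul_def by (intro tendsto_intros r2)
    then have "(\<lambda>n. mmul L1 (ces T (r2 (Suc n))) s t) \<longlonglongrightarrow> mmul L1 L2 s t"
      by (rule LIMSEQ_Suc)
    moreover have "mmul L1 (ces T (r2 (Suc n))) s t = L1 s t" for n
      by (rule fix_ces[OF limpt_right[OF assms(1)] pos2])
    ultimately show ?thesis by (simp add: LIMSEQ_const_iff)
  qed
  moreover have "L2 s t = mmul L1 L2 s t" for s t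
  proof -
    have "(\<lambda>n. mmul (ces T (r1 n)) L2 s t) \<longlonglongrightarrow> mmul L1 L2 s t"
      unfolding mmul_def by (intro tendsto_intros r1)
    then have "(\<lambda>n. mmul (ces T (r1 (Suc n))) L2 s t) \<longlonglongrightarrow> mmul L1 L2 s t"
      by (rule LIMSEQ_Suc)
    moreover have "mmul (ces T (r1 (Suc n))) L2 s t = L2 s t" for n
      by (rule fix_ces'[OF limpt_left[OF assms(2)] pos1])
    ultimately show ?thesis by (simp add: LIMSEQ_const_iff)
  qed
  ultimately show ?thesis by (simp add: fun_eq_iff)
qed

definition cv :: "nat \<Rightarrow> real^'a^'a" where
  "cv N = (\<chi> s. \<chi> t. ces T N s t)"

lemma cv_bounded: "bounded (range cv)"
proof -
  have "norm (cv N) \<le> real CARD('a) * real CARD('a)" for N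
  proof -
    have "norm (cv N) = L2_set (\<lambda>i. norm (cv N $ i)) UNIV" by (simp add: norm_vec_def)
    also have "\<dots> \<le> (\<Sum>i\<in>UNIV. norm (cv N $ i))" by (rule L2_set_le_sum) simp
    also have "\<dots> \<le> (\<Sum>i\<in>(UNIV::'a set). \<Sum>j\<in>(UNIV::'a set). \<bar>cv N $ i $ j\<bar>)"
      by (rule sum_mono) (rule norm_le_l1_cart)
    also have "\<dots> \<le> (\<Sum>i\<in>(UNIV::'a set). \<Sum>j\<in>(UNIV::'a set). 1)"
      by (intro sum_mono) (simp add: cv_def ces_le1 ces_nonneg)
    finally show ?thesis by simp
  qed
  then show ?thesis unfolding bounded_iff by blast
qed

lemma limpt_of_vec:
  assumes "strict_mono r" "(cv \<circ> r) \<longlonglongrightarrow> l"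
  shows "limpt (\<lambda>s t. l $ s $ t)"
  unfolding limpt_def
proof (intro exI[of _ r] conjI allI)
  show "strict_mono r" by fact
  fix s t
  have "(\<lambda>n. cv (r n)) \<longlonglongrightarrow> l" using assms(2) by (simp add: o_def)
  then have "(\<lambda>n. cv (r n) $ s $ t) \<longlonglongrightarrow> l $ s $ t" by (intro tendsto_vec_nth)
  then show "(\<lambda>n. ces T (r n) s t) \<longlonglongrightarrow> l $ s $ t" by (simp add: cv_def)
qed

lemma limpt_ex: "\<exists>L. limpt L"
proof -
  obtain l r where "strict_mono r" "(cv \<circ> r) \<longlonglongrightarrow> l"
    using bounded_imp_convergent_subsequence[OF cv_bounded] by blast
  then show ?thesis using limpt_of_vec by blast
qed

lemma ces_conv: assumes "limpt L" shows "(\<lambda>N. ces T N s t) \<longlonglongrightarrow> L s t"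
proof -
  define vL :: "real^'a^'a" where "vL = (\<chi> s. \<chi> t. L s t)"
  have "cv \<longlonglongrightarrow> vL"
  proof (rule ccontr)
    assume "\<not> cv \<longlonglongrightarrow> vL"
    then obtain e where e: "e > 0" "\<not> eventually (\<lambda>N. dist (cv N) vL < e) sequentially"
      unfolding tendsto_iff by blast
    from not_eventually_sequentiallyD[OF e(2)] obtain q :: "nat \<Rightarrow> nat" where q1: "strict_mono q"
      and q2: "\<forall>n. \<not> dist (cv (q n)) vL < e" by blast
    note q = q1 q2[rule_format]
    have "bounded (range (cv \<circ> q))"
      by (rule bounded_subset[OF cv_bounded]) auto
    then obtain l r where lr: "strict_mono r" "((cv \<circ> q) \<circ> r) \<longlonglongrightarrow> l"
      using bounded_imp_convergent_subsequence by blast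
    have "limpt (\<lambda>s t. l $ s $ t)"
      using limpt_of_vec[of "q \<circ> r" l] lr q(1) by (simp add: strict_mono_o o_assoc)
    then have "(\<lambda>s t. l $ s $ t) = L" using assms by (rule limpt_unique)
    then have "l = vL" by (auto simp: vL_def vec_eq_iff fun_eq_iff)
    with lr have "eventually (\<lambda>n. dist (((cv \<circ> q) \<circ> r) n) vL < e) sequentially"
      using e(1) unfolding tendsto_iff by blast
    then obtain n where "dist (((cv \<circ> q) \<circ> r) n) vL < e" by (auto simp: eventually_sequentially)
    with q(2) show False by simp
  qed
  from tendsto_vec_nth[OF tendsto_vec_nth[OF this, of s], of t] show ?thesis
    by (simp add: cv_def vL_def)
qed

lemma limpt_nonneg: "limpt L \<Longrightarrow> 0 \<le> L s t"
  using ces_conv[of L s t] by (auto intro: LIMSEQ_le_const ces_nonneg)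

lemma limpt_rows: assumes "limpt L" shows "(\<Sum>t\<in>UNIV. L s t) = 1"
proof -
  have "(\<lambda>N. \<Sum>t\<in>UNIV. ces T N s t) \<longlonglongrightarrow> (\<Sum>t\<in>UNIV. L s t)"
    by (intro tendsto_intros ces_conv assms)
  then have "(\<lambda>N. \<Sum>t\<in>UNIV. ces T (Suc N) s t) \<longlonglongrightarrow> (\<Sum>t\<in>UNIV. L s t)"
    by (rule LIMSEQ_Suc)
  then show ?thesis by (simp add: ces_rows LIMSEQ_const_iff)
qed

end

lemma trans_stoch:
  assumes "memvec_ok p" "memvec_ok q"
  shows "stoch (trans_prob p q)"
proof
  fix s t
  show "0 \<le> trans_prob p q s t"
    using assms unfolding memvec_ok_def trans_prob_def
    by (intro mult_nonneg_nonneg) (auto simp: algebra_simps)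
next
  fix s
  show "(\<Sum>t\<in>UNIV. trans_prob p q s t) = 1"
    by (simp add: UNIV_outcome trans_prob_def algebra_simps)
qed

lemma dist_mpow:
  "outcome_dist sx sy n t = mpow (trans_prob (fst sx) (fst sy)) n (mk_outcome (snd sx) (snd sy)) t"
  by (induction n arbitrary: t) (auto simp: mid_def mmul_def)

lemma avg_stationary:
  assumes "memvec_ok (fst sx)" "memvec_ok (fst sy)"
  shows "\<exists>\<pi>. (\<forall>t. 0 \<le> \<pi> t) \<and> (\<Sum>t\<in>UNIV. \<pi> t) = 1
     \<and> (\<forall>t. \<pi> t = (\<Sum>s\<in>UNIV. \<pi> s * trans_prob (fst sx) (fst sy) s t))
     \<and> avg_payoff R P sx sy = (\<Sum>t\<in>UNIV. \<pi> t * S_X R P t)"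
proof -
  define T where "T = trans_prob (fst sx) (fst sy)"
  define s0 where "s0 = mk_outcome (snd sx) (snd sy)"
  interpret stoch T unfolding T_def by (rule trans_stoch[OF assms])
  obtain L where L: "limpt L" using limpt_ex by blast
  have eq: "(\<Sum>n<N. \<Sum>s\<in>UNIV. outcome_dist sx sy n s * S_X R P s) / real N
      = (\<Sum>s\<in>UNIV. ces T N s0 s * S_X R P s)" for N
  proof -
    have "(\<Sum>n<N. \<Sum>s\<in>UNIV. outcome_dist sx sy n s * S_X R P s)
        = (\<Sum>n<N. \<Sum>s\<in>UNIV. mpow T n s0 s * S_X R P s)"
      by (simp add: dist_mpow T_def[symmetric] s0_def[symmetric] del: mpow.simps)
    also have "\<dots> = (\<Sum>s\<in>UNIV. \<Sum>n<N. mpow T n s0 s * S_X R P s)"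
      by (rule sum.swap)
    also have "\<dots> = (\<Sum>s\<in>UNIV. (\<Sum>n<N. mpow T n s0 s) * S_X R P s)"
      by (simp add: sum_distrib_right)
    finally have h: "(\<Sum>n<N. \<Sum>s\<in>UNIV. outcome_dist sx sy n s * S_X R P s)
        = (\<Sum>s\<in>UNIV. (\<Sum>n<N. mpow T n s0 s) * S_X R P s)" .
    have "(\<Sum>s\<in>UNIV. (\<Sum>n<N. mpow T n s0 s) * S_X R P s) / real N
        = (\<Sum>s\<in>UNIV. (\<Sum>n<N. mpow T n s0 s) * S_X R P s / real N)"
      by (rule sum_divide_distrib)
    also have "\<dots> = (\<Sum>s\<in>UNIV. ces T N s0 s * S_X R P s)"
      by (rule sum.cong) (simp_all add: ces_def del: mpow.simps)
    finally show ?thesis using h by simp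
  qed
  have "(\<lambda>N. \<Sum>s\<in>UNIV. ces T N s0 s * S_X R P s) \<longlonglongrightarrow> (\<Sum>s\<in>UNIV. L s0 s * S_X R P s)"
    by (intro tendsto_intros ces_conv L)
  then have "avg_payoff R P sx sy = (\<Sum>s\<in>UNIV. L s0 s * S_X R P s)"
    unfolding avg_payoff_def eq by (rule limI)
  moreover have "\<forall>t. L s0 t = (\<Sum>s\<in>UNIV. L s0 s * trans_prob (fst sx) (fst sy) s t)"
  proof
    fix t
    have "mmul L T s0 t = L s0 t" using limpt_right[OF L] by simp
    then show "L s0 t = (\<Sum>s\<in>UNIV. L s0 s * trans_prob (fst sx) (fst sy) s t)"
      unfolding mmul_def T_def by simp
  qed
  moreover have "\<forall>t. 0 \<le> L s0 t" using limpt_nonneg[OF L] by blast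
  moreover have "(\<Sum>t\<in>UNIV. L s0 t) = 1" using limpt_rows[OF L] .
  ultimately show ?thesis by blast
qed



lemma stat4:
  assumes "\<forall>t. \<pi> t = (\<Sum>s\<in>UNIV. \<pi> s * trans_prob q p s t)"
  shows "\<pi> CC = \<pi> CC * q CC * p CC + \<pi> CD * q CD * p DC + \<pi> DC * q DC * p CD + \<pi> DD * q DD * p DD"
    and "\<pi> CD = \<pi> CC * q CC * (1 - p CC) + \<pi> CD * q CD * (1 - p DC) + \<pi> DC * q DC * (1 - p CD) + \<pi> DD * q DD * (1 - p DD)"
    and "\<pi> DC = \<pi> CC * (1 - q CC) * p CC + \<pi> CD * (1 - q CD) * p DC + \<pi> DC * (1 - q DC) * p CD + \<pi> DD * (1 - q DD) * p DD"
    and "\<pi> DD = \<pi> CC * (1 - q CC) * (1 - p CC) + \<pi> CD * (1 - q CD) * (1 - p DC) + \<pi> DC * (1 - q DC) * (1 - p CD) + \<pi> DD * (1 - q DD) * (1 - p DD)"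
proof -
  have e: "\<pi> t = (\<Sum>s\<in>UNIV. \<pi> s * trans_prob q p s t)" for t using assms by blast
  have s4: "(\<Sum>s\<in>UNIV. f s) = f CC + f CD + f DC + (f DD :: real)" for f
    by (simp add: UNIV_outcome)
  have "(\<Sum>s\<in>UNIV. \<pi> s * trans_prob q p s CC) = \<pi> CC * q CC * p CC + \<pi> CD * q CD * p DC + \<pi> DC * q DC * p CD + \<pi> DD * q DD * p DD"
    by (simp add: s4 trans_prob_def mult.assoc)
  then show "\<pi> CC = \<pi> CC * q CC * p CC + \<pi> CD * q CD * p DC + \<pi> DC * q DC * p CD + \<pi> DD * q DD * p DD" by (rule trans[OF e[of CC]])
  have "(\<Sum>s\<in>UNIV. \<pi> s * trans_prob q p s CD) = \<pi> CC * q CC * (1 - p CC) + \<pi> CD * q CD * (1 - p DC) + \<pi> DC * q DC * (1 - p CD) + \<pi> DD * q DD * (1 - p DD)"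
    by (simp add: s4 trans_prob_def mult.assoc)
  then show "\<pi> CD = \<pi> CC * q CC * (1 - p CC) + \<pi> CD * q CD * (1 - p DC) + \<pi> DC * q DC * (1 - p CD) + \<pi> DD * q DD * (1 - p DD)" by (rule trans[OF e[of CD]])
  have "(\<Sum>s\<in>UNIV. \<pi> s * trans_prob q p s DC) = \<pi> CC * (1 - q CC) * p CC + \<pi> CD * (1 - q CD) * p DC + \<pi> DC * (1 - q DC) * p CD + \<pi> DD * (1 - q DD) * p DD"
    by (simp add: s4 trans_prob_def mult.assoc)
  then show "\<pi> DC = \<pi> CC * (1 - q CC) * p CC + \<pi> CD * (1 - q CD) * p DC + \<pi> DC * (1 - q DC) * p CD + \<pi> DD * (1 - q DD) * p DD" by (rule trans[OF e[of DC]])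
  have "(\<Sum>s\<in>UNIV. \<pi> s * trans_prob q p s DD) = \<pi> CC * (1 - q CC) * (1 - p CC) + \<pi> CD * (1 - q CD) * (1 - p DC) + \<pi> DC * (1 - q DC) * (1 - p CD) + \<pi> DD * (1 - q DD) * (1 - p DD)"
    by (simp add: s4 trans_prob_def mult.assoc)
  then show "\<pi> DD = \<pi> CC * (1 - q CC) * (1 - p CC) + \<pi> CD * (1 - q CD) * (1 - p DC) + \<pi> DC * (1 - q DC) * (1 - p CD) + \<pi> DD * (1 - q DD) * (1 - p DD)" by (rule trans[OF e[of DD]])
qed

lemma y_ident:
  assumes "\<forall>t. \<pi> t = (\<Sum>s\<in>UNIV. \<pi> s * trans_prob q p s t)"
  shows "\<pi> CC + \<pi> DC = \<pi> CC * p CC + \<pi> CD * p DC + \<pi> DC * p CD + \<pi> DD * p DD"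
  using stat4(1)[OF assms] stat4(3)[OF assms] by algebra

lemma x_ident:
  assumes "\<forall>t. \<pi> t = (\<Sum>s\<in>UNIV. \<pi> s * trans_prob p q s t)"
  shows "\<pi> CC + \<pi> CD = \<pi> CC * p CC + \<pi> CD * p CD + \<pi> DC * p DC + \<pi> DD * p DD"
  using stat4(1)[OF assms] stat4(2)[OF assms] by algebra

lemma sum4: "(\<Sum>t\<in>UNIV. f t) = f CC + f CD + f DC + (f DD :: real)"
  by (simp add: UNIV_outcome)



lemma part_a_other:
  assumes okx: "memvec_ok (fst sx)" and oky: "memvec_ok (fst sy)"
    and p: "fst sy CC < 1" "fst sy CD < 1" "fst sy DC = 0" "fst sy DD = 0"
    and nf: "\<not> firm (fst sx)" and P: "0 < P"
  shows "avg_payoff R P sx sy < P"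
proof -
  obtain \<pi> where nn: "\<forall>t. 0 \<le> \<pi> t" and s1: "(\<Sum>t\<in>UNIV. \<pi> t) = 1"
    and st: "\<forall>t. \<pi> t = (\<Sum>s\<in>UNIV. \<pi> s * trans_prob (fst sx) (fst sy) s t)"
    and av: "avg_payoff R P sx sy = (\<Sum>t\<in>UNIV. \<pi> t * S_X R P t)"
    using avg_stationary[OF okx oky] by blast
  let ?q = "fst sx" and ?p = "fst sy"
  have q4: "?q DD > 0" using okx nf unfolding memvec_ok_def firm_def
    by (metis less_eq_real_def)
  have q2: "?q CD \<le> 1" using okx unfolding memvec_ok_def by blast
  have yi: "\<pi> CC + \<pi> DC = \<pi> CC * ?p CC + \<pi> DC * ?p CD"
    using y_ident[OF st] p(3,4) by algebra
  have "\<pi> CC * (1 - ?p CC) + \<pi> DC * (1 - ?p CD) = 0" using yi by algebra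
  moreover have "\<pi> CC * (1 - ?p CC) \<ge> 0" "\<pi> DC * (1 - ?p CD) \<ge> 0" using nn p by simp_all
  ultimately have "\<pi> CC * (1 - ?p CC) = 0" "\<pi> DC * (1 - ?p CD) = 0" by linarith+
  then have a: "\<pi> CC = 0" and c: "\<pi> DC = 0" using p by simp_all
  have dd: "\<pi> DD = \<pi> CD * (1 - ?q CD) + \<pi> DD * (1 - ?q DD)"
    using stat4(4)[OF st] p(3,4) a c by algebra
  have sum: "\<pi> CD + \<pi> DD = 1" using s1 a c by (simp add: sum4)
  have "\<pi> DD < 1"
  proof (rule ccontr)
    assume "\<not> \<pi> DD < 1"
    have "0 \<le> \<pi> CD" using nn by blast
    then have "\<pi> DD = 1" "\<pi> CD = 0" using sum \<open>\<not> \<pi> DD < 1\<close> by linarith+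
    with dd q4 show False by simp
  qed
  then have "\<pi> DD * P < P" using P by simp
  then show ?thesis using av a c by (simp add: sum4)
qed

lemma part_a_self:
  assumes okx: "memvec_ok (fst sx)" and eq: "fst sy = fst sx"
    and p: "fst sx CC < 1" "fst sx CD < 1" "fst sx DC = 0" "fst sx DD = 0"
  shows "avg_payoff R P sx sy = P"
proof -
  have oky: "memvec_ok (fst sy)" using okx eq by simp
  obtain \<pi> where nn: "\<forall>t. 0 \<le> \<pi> t" and s1: "(\<Sum>t\<in>UNIV. \<pi> t) = 1"
    and st: "\<forall>t. \<pi> t = (\<Sum>s\<in>UNIV. \<pi> s * trans_prob (fst sx) (fst sy) s t)"
    and av: "avg_payoff R P sx sy = (\<Sum>t\<in>UNIV. \<pi> t * S_X R P t)"
    using avg_stationary[OF okx oky] by blast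
  let ?p = "fst sx"
  have st': "\<forall>t. \<pi> t = (\<Sum>s\<in>UNIV. \<pi> s * trans_prob (fst sx) (fst sx) s t)"
    using st unfolding eq .
  have p1: "0 \<le> ?p CC" using okx unfolding memvec_ok_def by blast
  have e1: "\<pi> CC = \<pi> CC * (?p CC * ?p CC)" using stat4(1)[OF st'] p(3,4) by algebra
  have "?p CC * ?p CC \<le> ?p CC * 1" by (rule mult_left_mono) (use p(1) p1 in auto)
  then have lt: "1 - ?p CC * ?p CC \<noteq> 0" using p(1) by simp
  have "\<pi> CC * (1 - ?p CC * ?p CC) = 0" using e1 by algebra
  then have a: "\<pi> CC = 0" using lt by simp
  have e2: "\<pi> CD = \<pi> CD * ?p CD" using stat4(2)[OF st'] p(3,4) a by algebra
  then have "\<pi> CD * (1 - ?p CD) = 0" by algebra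
  then have b: "\<pi> CD = 0" using p(2) by simp
  have e3: "\<pi> DC = \<pi> DC * ?p CD" using stat4(3)[OF st'] p(3,4) a by algebra
  then have "\<pi> DC * (1 - ?p CD) = 0" by algebra
  then have c: "\<pi> DC = 0" using p(2) by simp
  have d: "\<pi> DD = 1" using s1 a b c by (simp add: sum4)
  show ?thesis using av a b c d by (simp add: sum4)
qed



lemma part_b_other:
  assumes okx: "memvec_ok (fst sx)" and oky: "memvec_ok (fst sy)"
    and p: "fst sy CC = 1" "fst sy CD < 1" "fst sy DC = 0" "fst sy DD = 0"
    and nf: "\<not> firm (fst sx)" and na: "\<not> agreeable (fst sx)" and P: "0 < P"
  shows "avg_payoff R P sx sy < P"
proof -
  obtain \<pi> where nn: "\<forall>t. 0 \<le> \<pi> t" and s1: "(\<Sum>t\<in>UNIV. \<pi> t) = 1"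
    and st: "\<forall>t. \<pi> t = (\<Sum>s\<in>UNIV. \<pi> s * trans_prob (fst sx) (fst sy) s t)"
    and av: "avg_payoff R P sx sy = (\<Sum>t\<in>UNIV. \<pi> t * S_X R P t)"
    using avg_stationary[OF okx oky] by blast
  let ?q = "fst sx" and ?p = "fst sy"
  have q4: "?q DD > 0" using okx nf unfolding memvec_ok_def firm_def
    by (metis less_eq_real_def)
  have q1: "?q CC < 1" using okx na unfolding memvec_ok_def agreeable_def
    by (metis less_eq_real_def)
  have yi: "\<pi> CC + \<pi> DC = \<pi> CC + \<pi> DC * ?p CD"
    using y_ident[OF st] p(1,3,4) by algebra
  then have "\<pi> DC * (1 - ?p CD) = 0" by algebra
  then have c: "\<pi> DC = 0" using p by simp
  have "\<pi> CC = \<pi> CC * ?q CC" using stat4(1)[OF st] p(1,3,4) c by algebra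
  then have "\<pi> CC * (1 - ?q CC) = 0" by algebra
  then have a: "\<pi> CC = 0" using q1 by simp
  have dd: "\<pi> DD = \<pi> CD * (1 - ?q CD) + \<pi> DD * (1 - ?q DD)"
    using stat4(4)[OF st] p(1,3,4) a c by algebra
  have sum: "\<pi> CD + \<pi> DD = 1" using s1 a c by (simp add: sum4)
  have "\<pi> DD < 1"
  proof (rule ccontr)
    assume "\<not> \<pi> DD < 1"
    have "0 \<le> \<pi> CD" using nn by blast
    then have "\<pi> DD = 1" "\<pi> CD = 0" using sum \<open>\<not> \<pi> DD < 1\<close> by linarith+
    with dd q4 show False by simp
  qed
  then have "\<pi> DD * P < P" using P by simp
  then show ?thesis using av a c by (simp add: sum4)
qed

lemma part_b_self:
  assumes eq: "fst sy = fst sx" "snd sy = snd sx"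
    and p: "fst sx CC = 1" "fst sx DC = 0" "fst sx DD = 0" and PR: "P < R"
  shows "avg_payoff R P sx sy \<ge> P"
proof -
  define s0 where "s0 = mk_outcome (snd sx) (snd sy)"
  have s0: "s0 = CC \<or> s0 = DD" using eq(2) by (simp add: s0_def mk_outcome_def)
  have T: "trans_prob (fst sx) (fst sy) s0 t = (if t = s0 then 1 else 0)" for t
    using s0 eq p by (cases t) (auto simp: trans_prob_def)
  have d: "outcome_dist sx sy n t = (if t = s0 then 1 else 0)" for n t
  proof (induction n arbitrary: t)
    case 0 then show ?case by (simp add: s0_def)
  next
    case (Suc n) then show ?case by (simp add: if01_mult T)
  qed
  have "(\<lambda>N. (\<Sum>n<N. \<Sum>s\<in>UNIV. outcome_dist sx sy n s * S_X R P s) / real N)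
      = (\<lambda>N. real N * S_X R P s0 / real N)"
    by (simp add: d if01_mult)
  moreover have "(\<lambda>N. real (Suc N) * S_X R P s0 / real (Suc N)) \<longlonglongrightarrow> S_X R P s0" by simp
  then have "(\<lambda>N. real N * S_X R P s0 / real N) \<longlonglongrightarrow> S_X R P s0" by (rule LIMSEQ_imp_Suc)
  ultimately have "avg_payoff R P sx sy = S_X R P s0"
    unfolding avg_payoff_def by (simp add: limI)
  then show ?thesis using s0 PR by auto
qed



lemma zd_vals:
  assumes "\<forall>s. press_dyson p s = \<alpha> * S_X R P s + \<beta> * S_Y R P s + \<gamma> + \<delta> * e23 s" "\<delta> = 0"
  shows "p CC = 1 + \<alpha> * R + \<beta> * R + \<gamma>" "p CD = 1 + \<beta> + \<gamma>" "p DC = \<alpha> + \<gamma>"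
    "p DD = \<alpha> * P + \<beta> * P + \<gamma>"
  using assms(1)[rule_format, of CC] assms(1)[rule_format, of CD] assms(1)[rule_format, of DC]
    assms(1)[rule_format, of DD] assms(2)
  by (simp_all add: press_dyson_def)

lemma part_c_other:
  assumes okx: "memvec_ok (fst sx)" and oky: "memvec_ok (fst sy)"
    and pv: "fst sy CC = 1 + \<alpha> * R + \<beta> * R + \<gamma>" "fst sy CD = 1 + \<beta> + \<gamma>" "fst sy DC = \<alpha> + \<gamma>"
    "fst sy DD = \<alpha> * P + \<beta> * P + \<gamma>"
    and firm: "fst sy DD = 0" and g: "\<gamma> > 0" and al: "\<alpha> < 0"
    and nf: "\<not> firm (fst sx)" and P: "0 < P" "P < 1/2" "P < R"
  shows "avg_payoff R P sx sy < P"
proof -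
  obtain \<pi> where nn: "\<forall>t. 0 \<le> \<pi> t" and s1: "(\<Sum>t\<in>UNIV. \<pi> t) = 1"
    and st: "\<forall>t. \<pi> t = (\<Sum>s\<in>UNIV. \<pi> s * trans_prob (fst sx) (fst sy) s t)"
    and av: "avg_payoff R P sx sy = (\<Sum>t\<in>UNIV. \<pi> t * S_X R P t)"
    using avg_stationary[OF okx oky] by blast
  let ?q = "fst sx" and ?p = "fst sy"
  define a b c d where "a = \<pi> CC" "b = \<pi> CD" "c = \<pi> DC" "d = \<pi> DD"
  have nn': "a \<ge> 0" "b \<ge> 0" "c \<ge> 0" "d \<ge> 0" using nn by (simp_all add: a_b_c_d_def)
  have sum: "a + b + c + d = 1" using s1 by (simp add: sum4 a_b_c_d_def)
  have q4: "?q DD > 0" using okx nf unfolding memvec_ok_def firm_def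
    by (metis less_eq_real_def)
  have pCD: "?p CD \<le> 1" "?p DC \<ge> 0" using oky unfolding memvec_ok_def by auto
  have be: "\<beta> < 0" using pCD pv g by linarith
  have alg: "\<alpha> \<ge> - \<gamma>" using pCD pv by linarith
  have gam: "\<gamma> = - (\<alpha> * P + \<beta> * P)" using firm pv by linarith
  define sX where "sX = a * R + c + d * P"
  define sY where "sY = a * R + b + d * P"
  have av': "avg_payoff R P sx sy = sX" using av by (simp add: sum4 sX_def a_b_c_d_def)
  have yi: "a + c = a * ?p CC + b * ?p DC + c * ?p CD + d * ?p DD"
    using y_ident[OF st] by (simp add: a_b_c_d_def)
  have key: "\<alpha> * sY + \<beta> * sX + \<gamma> * (a + b + c + d) = 0"
    using yi unfolding pv sX_def sY_def by (simp add: algebra_simps)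
  then have key2: "\<alpha> * (sY - P) + \<beta> * (sX - P) = 0"
    using sum gam by algebra
  have ab: "P * (\<alpha> - \<beta>) > 0"
  proof -
    have "P * (\<alpha> - \<beta>) = 2 * P * \<alpha> + \<gamma>" using gam by (simp add: algebra_simps)
    moreover have "P * \<alpha> \<ge> P * (- \<gamma>)" by (rule mult_left_mono[OF alg]) (use P in simp)
    moreover have "\<gamma> * (1 - 2 * P) > 0" using g P by simp
    ultimately show ?thesis by (simp add: algebra_simps)
  qed
  then have ab': "\<alpha> - \<beta> > 0" using P by (simp add: zero_less_mult_iff)
  show ?thesis
  proof (rule ccontr)
    assume "\<not> avg_payoff R P sx sy < P"
    then have x: "sX - P \<ge> 0" using av' by simp
    have xy: "(sX - P) + (sY - P) = 2 * (R - P) * a + (1 - 2 * P) * (b + c)"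
      using sum unfolding sX_def sY_def by algebra
    have xy0: "2 * (R - P) * a + (1 - 2 * P) * (b + c) \<ge> 0"
      using nn' P by (intro add_nonneg_nonneg mult_nonneg_nonneg) auto
    have "\<alpha> * ((sX - P) + (sY - P)) = (\<alpha> - \<beta>) * (sX - P)"
      using key2 by (simp add: algebra_simps)
    also have "\<dots> \<ge> 0" using ab' x by simp
    finally have "(sX - P) + (sY - P) \<le> 0" using al
      by (simp add: zero_le_mult_iff)
    then have z: "2 * (R - P) * a + (1 - 2 * P) * (b + c) = 0" using xy xy0 by linarith
    have "2 * (R - P) * a \<ge> 0" "(1 - 2 * P) * (b + c) \<ge> 0" using nn' P by auto
    then have "2 * (R - P) * a = 0" "(1 - 2 * P) * (b + c) = 0" using z by linarith+
    then have "a = 0" "b + c = 0" using P by auto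
    then have a0: "a = 0" and b0: "b = 0" and c0: "c = 0" and d1: "d = 1" using nn' sum by auto
    have "d = d * (1 - ?q DD)"
      using stat4(4)[OF st] firm a0 b0 c0 unfolding a_b_c_d_def by algebra
    with d1 q4 show False by simp
  qed
qed

lemma part_c_self:
  assumes okx: "memvec_ok (fst sx)" and eq: "fst sy = fst sx"
    and pv: "fst sx CC = 1 + \<alpha> * R + \<beta> * R + \<gamma>" "fst sx CD = 1 + \<beta> + \<gamma>" "fst sx DC = \<alpha> + \<gamma>"
    "fst sx DD = \<alpha> * P + \<beta> * P + \<gamma>"
    and firm: "fst sx DD = 0" and g: "\<gamma> > 0" and al: "\<alpha> < 0"
    and P: "0 < P" "P < 1/2" "P < R"
  shows "avg_payoff R P sx sy = P"
proof -
  have oky: "memvec_ok (fst sy)" using okx eq by simp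
  obtain \<pi> where nn: "\<forall>t. 0 \<le> \<pi> t" and s1: "(\<Sum>t\<in>UNIV. \<pi> t) = 1"
    and st: "\<forall>t. \<pi> t = (\<Sum>s\<in>UNIV. \<pi> s * trans_prob (fst sx) (fst sy) s t)"
    and av: "avg_payoff R P sx sy = (\<Sum>t\<in>UNIV. \<pi> t * S_X R P t)"
    using avg_stationary[OF okx oky] by blast
  define a b c d where "a = \<pi> CC" "b = \<pi> CD" "c = \<pi> DC" "d = \<pi> DD"
  have sum: "a + b + c + d = 1" using s1 by (simp add: sum4 a_b_c_d_def)
  have pCD: "fst sx CD \<le> 1" "fst sx DC \<ge> 0" using okx unfolding memvec_ok_def by auto
  have be: "\<beta> < 0" using pCD pv g by linarith
  have alg: "\<alpha> \<ge> - \<gamma>" using pCD pv by linarith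
  have gam: "\<gamma> = - (\<alpha> * P + \<beta> * P)" using firm pv by linarith
  define sX where "sX = a * R + c + d * P"
  define sY where "sY = a * R + b + d * P"
  have av': "avg_payoff R P sx sy = sX" using av by (simp add: sum4 sX_def a_b_c_d_def)
  have yi: "a + c = a * fst sx CC + b * fst sx DC + c * fst sx CD + d * fst sx DD"
    using y_ident[OF st] eq by (simp add: a_b_c_d_def)
  have xi: "a + b = a * fst sx CC + b * fst sx CD + c * fst sx DC + d * fst sx DD"
    using x_ident[OF st] by (simp add: a_b_c_d_def)
  have key: "\<alpha> * sY + \<beta> * sX + \<gamma> * (a + b + c + d) = 0"
    using yi unfolding pv sX_def sY_def by (simp add: algebra_simps)
  have keyx: "\<alpha> * sX + \<beta> * sY + \<gamma> * (a + b + c + d) = 0"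
    using xi unfolding pv sX_def sY_def by (simp add: algebra_simps)
  have ab: "P * (\<alpha> - \<beta>) > 0"
  proof -
    have "P * (\<alpha> - \<beta>) = 2 * P * \<alpha> + \<gamma>" using gam by (simp add: algebra_simps)
    moreover have "P * \<alpha> \<ge> P * (- \<gamma>)" by (rule mult_left_mono[OF alg]) (use P in simp)
    moreover have "\<gamma> * (1 - 2 * P) > 0" using g P by simp
    ultimately show ?thesis by (simp add: algebra_simps)
  qed
  then have ab': "\<alpha> - \<beta> \<noteq> 0" using P by auto
  have "(\<alpha> - \<beta>) * (sX - sY) = 0" using key keyx by (simp add: algebra_simps)
  then have e: "sX = sY" using ab' by simp
  have "(\<alpha> + \<beta>) * (sX - P) = 0" using key e sum gam by algebra
  moreover have "\<alpha> + \<beta> \<noteq> 0" using al be by simp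
  ultimately have "sX = P" by simp
  then show ?thesis using av' by simp
qed



theorem theorem4p9:
  fixes R P :: real and I :: "'i set" and \<sigma> :: "'i \<Rightarrow> strategy" and istar :: 'i
  assumes payoffs: "0 < P" "P < R" "R < 1" "2 * R > 1"
    and finI: "finite I" and istarI: "istar \<in> I"
    and valid: "\<forall>j\<in>I. memvec_ok (fst (\<sigma> j))"
  shows
    "((\<exists>p1 p2. fst (\<sigma> istar) CC = p1 \<and> fst (\<sigma> istar) CD = p2 \<and>
              fst (\<sigma> istar) DC = 0 \<and> fst (\<sigma> istar) DD = 0 \<and> p1 < 1 \<and> p2 < 1)
       \<and> (\<forall>j\<in>I. j \<noteq> istar \<longrightarrow> \<not> firm (fst (\<sigma> j)))
       \<longrightarrow> ESS I (\<lambda>i j. avg_payoff R P (\<sigma> i) (\<sigma> j)) istar)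
   \<and> ((\<exists>p2. fst (\<sigma> istar) CC = 1 \<and> fst (\<sigma> istar) CD = p2 \<and>
              fst (\<sigma> istar) DC = 0 \<and> fst (\<sigma> istar) DD = 0 \<and> p2 < 1)
       \<and> (\<forall>j\<in>I. j \<noteq> istar \<longrightarrow> \<not> agreeable (fst (\<sigma> j)) \<and> \<not> firm (fst (\<sigma> j)))
       \<longrightarrow> ESS I (\<lambda>i j. avg_payoff R P (\<sigma> i) (\<sigma> j)) istar)
   \<and> (P < 1/2 \<and> firm (fst (\<sigma> istar))
       \<and> (\<exists>abar. nonexc_ZD_abar R P (fst (\<sigma> istar)) abar \<and> abar < 0)
       \<and> (\<forall>j\<in>I. j \<noteq> istar \<longrightarrow> \<not> firm (fst (\<sigma> j)))
       \<longrightarrow> ESS I (\<lambda>i j. avg_payoff R P (\<sigma> i) (\<sigma> j)) istar)"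
proof (intro conjI impI)
  have oks: "memvec_ok (fst (\<sigma> istar))" using valid istarI by blast
  {
    assume h: "(\<exists>p1 p2. fst (\<sigma> istar) CC = p1 \<and> fst (\<sigma> istar) CD = p2 \<and>
              fst (\<sigma> istar) DC = 0 \<and> fst (\<sigma> istar) DD = 0 \<and> p1 < 1 \<and> p2 < 1)
       \<and> (\<forall>j\<in>I. j \<noteq> istar \<longrightarrow> \<not> firm (fst (\<sigma> j)))"
    then have p: "fst (\<sigma> istar) CC < 1" "fst (\<sigma> istar) CD < 1" "fst (\<sigma> istar) DC = 0"
      "fst (\<sigma> istar) DD = 0" by auto
    have self: "avg_payoff R P (\<sigma> istar) (\<sigma> istar) = P"
      by (rule part_a_self[OF oks refl p])
    show "ESS I (\<lambda>i j. avg_payoff R P (\<sigma> i) (\<sigma> j)) istar"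
      unfolding ESS_def
    proof (intro ballI impI)
      fix j assume "j \<in> I" "j \<noteq> istar"
      then show "avg_payoff R P (\<sigma> j) (\<sigma> istar) < avg_payoff R P (\<sigma> istar) (\<sigma> istar)"
        using part_a_other[OF _ oks p, of "\<sigma> j" P R] valid h self payoffs by auto
    qed
  }
  {
    assume h: "(\<exists>p2. fst (\<sigma> istar) CC = 1 \<and> fst (\<sigma> istar) CD = p2 \<and>
              fst (\<sigma> istar) DC = 0 \<and> fst (\<sigma> istar) DD = 0 \<and> p2 < 1)
       \<and> (\<forall>j\<in>I. j \<noteq> istar \<longrightarrow> \<not> agreeable (fst (\<sigma> j)) \<and> \<not> firm (fst (\<sigma> j)))"
    then have p: "fst (\<sigma> istar) CC = 1" "fst (\<sigma> istar) CD < 1" "fst (\<sigma> istar) DC = 0"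
      "fst (\<sigma> istar) DD = 0" by auto
    have self: "avg_payoff R P (\<sigma> istar) (\<sigma> istar) \<ge> P"
      by (rule part_b_self) (use p payoffs in auto)
    show "ESS I (\<lambda>i j. avg_payoff R P (\<sigma> i) (\<sigma> j)) istar"
      unfolding ESS_def
    proof (intro ballI impI)
      fix j assume "j \<in> I" "j \<noteq> istar"
      then have "avg_payoff R P (\<sigma> j) (\<sigma> istar) < P"
        using part_b_other[OF _ oks p, of "\<sigma> j" P R] valid h payoffs by auto
      then show "avg_payoff R P (\<sigma> j) (\<sigma> istar) < avg_payoff R P (\<sigma> istar) (\<sigma> istar)"
        using self by linarith
    qed
  }
  {
    assume h: "P < 1/2 \<and> firm (fst (\<sigma> istar))
       \<and> (\<exists>abar. nonexc_ZD_abar R P (fst (\<sigma> istar)) abar \<and> abar < 0)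
       \<and> (\<forall>j\<in>I. j \<noteq> istar \<longrightarrow> \<not> firm (fst (\<sigma> j)))"
    then obtain abar \<alpha> \<beta> \<gamma> \<delta> where
      zd: "\<forall>s. press_dyson (fst (\<sigma> istar)) s = \<alpha> * S_X R P s + \<beta> * S_Y R P s + \<gamma> + \<delta> * e23 s"
      and d0: "\<delta> = 0" and g: "\<gamma> > 0" and ab: "abar = \<alpha> / \<gamma>" "abar < 0"
      unfolding nonexc_ZD_abar_def by blast
    have al: "\<alpha> < 0" using ab g by (simp add: divide_less_0_iff)
    have fm: "fst (\<sigma> istar) DD = 0" using h by (simp add: firm_def)
    note pv = zd_vals[OF zd d0]
    have self: "avg_payoff R P (\<sigma> istar) (\<sigma> istar) = P"
      by (rule part_c_self[OF oks refl pv fm g al]) (use h payoffs in auto)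
    show "ESS I (\<lambda>i j. avg_payoff R P (\<sigma> i) (\<sigma> j)) istar"
      unfolding ESS_def
    proof (intro ballI impI)
      fix j assume "j \<in> I" "j \<noteq> istar"
      then have "avg_payoff R P (\<sigma> j) (\<sigma> istar) < P"
        using part_c_other[OF _ oks pv fm g al, of "\<sigma> j"] valid h payoffs by auto
      then show "avg_payoff R P (\<sigma> j) (\<sigma> istar) < avg_payoff R P (\<sigma> istar) (\<sigma> istar)"
        using self by linarith
    qed
  }
qed


end
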